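(* Let $n,p,q$ be nonnegative integers. Then $$G_{n+2}(p,q)=\sum_{r=p+1}^{p+q+1}\binom{r-1}{p}\sum_{|\alpha|=p+q+1}\zeta(\alpha_1,\ldots,\alpha_{r-1},\alpha_r+n+1)$$ and $$G_{n+2}(p,q)=\frac{1}{p!\,q!\,n!}\int_{E_2}\left(\log\frac{1}{1-t_1}\right)^p\left(\log\frac{1}{1-t_2}\right)^q\left(\log\frac{t_2}{t_1}\right)^n\frac{dt_1\,dt_2}{(1-t_1)t_2}.$$
   Context: For positive integers $\alpha_1,\ldots,\alpha_r$ with $\alpha_r\ge 2$, the multiple zeta value is $\zeta(\alpha_1,\ldots,\alpha_r)=\sum_{1\le k_1<k_2<\cdots<k_r}k_1^{-\alpha_1}\cdots k_r^{-\alpha_r}$. For nonnegative integers $n,p,q$, $$G_{n+2}(p,q)=\sum_{1\le k_1<\cdots<k_{p+1}}\frac{1}{k_1\cdots k_p\,k_{p+1}^{n+2}}\sum_{1\le \ell_1\le \ell_2\le\cdots\le\ell_q\le k_{p+1}}\frac{1}{\ell_1\cdots\ell_q}.$$ For fixed $r$, $\sum_{|\alpha|=m}$ denotes the sum over all $r$-tuples $\alpha=(\alpha_1,\ldots,\alpha_r)$ of positive integers with $\alpha_1+\cdots+\alpha_r=m$. $E_2=\{(t_1,t_2)\in\mathbb{R}^2: 0<t_1<t_2<1\}$. *)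

theory Defs
  imports "HOL-Analysis.Analysis"
begin

definition incr_tuples :: "nat \<Rightarrow> nat list set" where
  "incr_tuples r = {k. length k = r \<and> sorted_wrt (<) k \<and> 0 \<notin> set k}"

text \<open>Multiple zeta value zeta(a_1,...,a_r) (convergent when the last entry is at least 2).\<close>
definition mzv :: "nat list \<Rightarrow> real" where
  "mzv a = (\<Sum>\<^sub>\<infinity> k \<in> incr_tuples (length a). \<Prod>i<length a. 1 / real (k ! i) ^ (a ! i))"

definition compositions :: "nat \<Rightarrow> nat \<Rightarrow> nat list set" where
  "compositions r m = {a. length a = r \<and> (\<forall>x\<in>set a. 0 < x) \<and> sum_list a = m}"

text \<open>Gfun n p q stands for G_{n+2}(p,q).\<close>
definition Gfun :: "nat \<Rightarrow> nat \<Rightarrow> nat \<Rightarrow> real" where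
  "Gfun n p q = (\<Sum>\<^sub>\<infinity> k \<in> incr_tuples (p + 1).
      (\<Prod>i<p. 1 / real (k ! i)) * (1 / real (k ! p) ^ (n + 2)) *
      (\<Sum>l \<in> {l. length l = q \<and> sorted l \<and> set l \<subseteq> {1..k ! p}}. \<Prod>i<q. 1 / real (l ! i)))"

definition E2 :: "(real \<times> real) set" where
  "E2 = {(t1, t2). 0 < t1 \<and> t1 < t2 \<and> t2 < 1}"

end

theory Submission
  imports Defs "HOL-Library.Multiset"
begin

definition IB :: "nat \<Rightarrow> nat \<Rightarrow> nat list set" where
  "IB p K = {k\<in>incr_tuples p. \<forall>x\<in>set k. x < K}"
definition SL :: "nat \<Rightarrow> nat \<Rightarrow> nat list set" where
  "SL q K = {l. length l = q \<and> sorted l \<and> set l \<subseteq> {1..K}}"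
definition cK :: "nat \<Rightarrow> nat \<Rightarrow> real" where
  "cK p K = (\<Sum>k\<in>IB p K. \<Prod>i<p. 1 / real (k!i))"
definition bK :: "nat \<Rightarrow> nat \<Rightarrow> real" where
  "bK q K = (\<Sum>l\<in>SL q K. \<Prod>i<q. 1 / real (l!i))"
definition Dset :: "nat \<Rightarrow> nat \<Rightarrow> nat multiset set" where
  "Dset N K = {M. size M = N \<and> set_mset M \<subseteq> {1..K} \<and> K \<in># M}"
definition Wm :: "nat multiset \<Rightarrow> real" where
  "Wm M = (\<Prod>x\<in>#M. 1 / real x)"

lemma prod_nth_mset: "(\<Prod>i<length xs. f (xs!i)) = (\<Prod>x\<in>#mset xs. f x)"
  by (induction xs) (auto simp: prod.lessThan_Suc_shift simp del: prod.lessThan_Suc)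

lemma finite_IB: "finite (IB p K)"
proof -
  have "IB p K \<subseteq> {xs. set xs \<subseteq> {..<K} \<and> length xs = p}"
    by (auto simp: IB_def incr_tuples_def)
  moreover have "finite {xs. set xs \<subseteq> {..<K} \<and> length xs = p}"
    by (rule finite_lists_length_eq) auto
  ultimately show ?thesis by (rule finite_subset)
qed

lemma finite_SL: "finite (SL q K)"
proof -
  have "SL q K \<subseteq> {xs. set xs \<subseteq> {1..K} \<and> length xs = q}"
    by (auto simp: SL_def)
  moreover have "finite {xs. set xs \<subseteq> {1..K} \<and> length xs = q}"
    by (rule finite_lists_length_eq) auto
  ultimately show ?thesis by (rule finite_subset)
qed

lemma finite_Dset: "finite (Dset N K)"
proof -
  have "Dset N K \<subseteq> mset ` {xs. set xs \<subseteq> {1..K} \<and> length xs = N}"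
  proof
    fix M assume "M \<in> Dset N K"
    then show "M \<in> mset ` {xs. set xs \<subseteq> {1..K} \<and> length xs = N}"
      by (intro image_eqI[of _ _ "sorted_list_of_multiset M"]) (auto simp: Dset_def simp flip: size_mset)
  qed
  moreover have "finite {xs. set xs \<subseteq> {1..K} \<and> length xs = N}"
    by (rule finite_lists_length_eq) auto
  ultimately show ?thesis by (meson finite_imageI finite_subset)
qed

lemma strict_sorted_sl: "sorted_wrt (<) k \<Longrightarrow> sorted_list_of_set (set k) = k"
  by (simp add: sorted_list_of_set_sort_remdups strict_sorted_iff distinct_remdups_id sorted_sort_id)

lemma mset_sl: "mset (sorted_list_of_set A) = mset_set A"
  by (metis mset_sorted_list_of_multiset sorted_list_of_mset_set)

lemma A1:
  assumes K: "K \<ge> 1"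
  shows "cK p K * bK q K = real K * (\<Sum>M\<in>Dset (p+q+1) K. real ((card (set_mset M) - 1) choose p) * Wm M)"
proof -
  define Ts where "Ts M = {T. T \<subseteq> set_mset M - {K} \<and> card T = p}" for M :: "nat multiset"
  have "cK p K * bK q K = (\<Sum>(k,l)\<in>IB p K \<times> SL q K. (\<Prod>i<p. 1 / real (k!i)) * (\<Prod>i<q. 1 / real (l!i)))"
    unfolding cK_def bK_def sum_product sum.cartesian_product by simp
  also have "\<dots> = (\<Sum>(M,T)\<in>Sigma (Dset (p+q+1) K) Ts. real K * Wm M)"
  proof (rule sum.reindex_bij_witness[where j = "\<lambda>(k,l). (mset k + mset l + {#K#}, set k)"
        and i = "\<lambda>(M,T). (sorted_list_of_set T, sorted_list_of_multiset (M - mset_set T - {#K#}))"])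
    fix a assume a: "a \<in> IB p K \<times> SL q K"
    obtain k l where kl: "a = (k,l)" by fastforce
    have k: "length k = p" "sorted_wrt (<) k" "0 \<notin> set k" "\<forall>x\<in>set k. x < K"
      using a kl by (auto simp: IB_def incr_tuples_def)
    have l: "length l = q" "sorted l" "set l \<subseteq> {1..K}" using a kl by (auto simp: SL_def)
    have dk: "distinct k" using k(2) strict_sorted_iff by blast
    have ms: "mset_set (set k) = mset k" using dk by (rule mset_set_set)
    show "(\<lambda>(M,T). (sorted_list_of_set T, sorted_list_of_multiset (M - mset_set T - {#K#})))
          ((\<lambda>(k,l). (mset k + mset l + {#K#}, set k)) a) = a"
      using kl k l ms strict_sorted_sl[OF k(2)] by (simp add: sorted_sort_id)
    show "(\<lambda>(k,l). (mset k + mset l + {#K#}, set k)) a \<in> Sigma (Dset (p+q+1) K) Ts"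
    proof -
      have "set k \<subseteq> {1..K}"
      proof
        fix x assume "x \<in> set k"
        then have "x \<noteq> 0" "x < K" using k(3,4) by (metis, simp)
        then show "x \<in> {1..K}" by simp
      qed
      moreover have "card (set k) = p" using dk k(1) distinct_card by blast
      ultimately show ?thesis using kl k l K by (auto simp: Dset_def Ts_def)
    qed
    show "(\<lambda>(M,T). real K * Wm M) ((\<lambda>(k,l). (mset k + mset l + {#K#}, set k)) a) =
          (\<lambda>(k,l). (\<Prod>i<p. 1 / real (k!i)) * (\<Prod>i<q. 1 / real (l!i))) a"
      using kl k(1) l(1) K by (simp add: Wm_def prod_nth_mset[where f = "\<lambda>x. 1 / real x", symmetric])
  next
    fix b assume b: "b \<in> Sigma (Dset (p+q+1) K) Ts"
    obtain M T where MT: "b = (M,T)" by fastforce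
    have M: "size M = p+q+1" "set_mset M \<subseteq> {1..K}" "K \<in># M" and T: "T \<subseteq> set_mset M - {K}" "card T = p"
      using b MT by (auto simp: Dset_def Ts_def)
    have fT: "finite T" using T(1) finite_subset by blast
    have sub1: "mset_set T \<subseteq># M"
      unfolding subseteq_mset_def
    proof
      fix x show "count (mset_set T) x \<le> count M x"
        using T(1) fT by (cases "x \<in> T") (auto simp: count_mset_set Suc_le_eq)
    qed
    have KT: "K \<notin> T" using T by auto
    have sub2: "{#K#} \<subseteq># M - mset_set T"
      using M(3) KT fT by (simp add: in_diff_count count_mset_set)
    have eq: "mset_set T + (M - mset_set T - {#K#}) + {#K#} = M"
    proof -
      have e1: "(M - mset_set T - {#K#}) + {#K#} = M - mset_set T"
        using sub2 by (rule subset_mset.diff_add)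
      have e2: "mset_set T + (M - mset_set T) = M"
        using sub1 by (rule subset_mset.add_diff_inverse)
      show ?thesis by (simp only: add.assoc e1 e2)
    qed
    show "(\<lambda>(k,l). (mset k + mset l + {#K#}, set k))
          ((\<lambda>(M,T). (sorted_list_of_set T, sorted_list_of_multiset (M - mset_set T - {#K#}))) b) = b"
      using MT fT eq by (simp add: mset_sorted_list_of_multiset mset_sl)
    show "(\<lambda>(M,T). (sorted_list_of_set T, sorted_list_of_multiset (M - mset_set T - {#K#}))) b \<in> IB p K \<times> SL q K"
    proof -
      have "\<forall>x\<in>T. 0 < x \<and> x < K" using T M by fastforce
      then have A: "sorted_list_of_set T \<in> IB p K"
        using fT T(2) by (auto simp: IB_def incr_tuples_def)
      have "size (M - mset_set T - {#K#}) = q"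
        using eq M(1) fT T(2) by (metis add_diff_cancel_left' add_diff_cancel_right' size_mset_set size_single size_union)
      moreover have "set_mset (M - mset_set T - {#K#}) \<subseteq> {1..K}"
        using M(2) by (meson in_diffD subset_iff)
      ultimately have B: "sorted_list_of_multiset (M - mset_set T - {#K#}) \<in> SL q K"
        by (auto simp: SL_def simp flip: size_mset)
      show ?thesis using A B MT by simp
    qed
  qed
  also have "\<dots> = (\<Sum>M\<in>Dset (p+q+1) K. real (card (Ts M)) * (real K * Wm M))"
    by (subst sum.Sigma[symmetric]) (auto simp: finite_Dset Ts_def)
  also have "\<dots> = (\<Sum>M\<in>Dset (p+q+1) K. real K * (real ((card (set_mset M) - 1) choose p) * Wm M))"
  proof (rule sum.cong[OF refl])
    fix M assume "M \<in> Dset (p+q+1) K"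
    then have "K \<in> set_mset M" by (simp add: Dset_def)
    then have "card (Ts M) = (card (set_mset M) - 1) choose p"
      unfolding Ts_def by (subst n_subsets) auto
    then show "real (card (Ts M)) * (real K * Wm M) = real K * (real ((card (set_mset M) - 1) choose p) * Wm M)"
      by simp
  qed
  finally show ?thesis by (simp add: sum_distrib_left)
qed

definition msf :: "nat list \<Rightarrow> nat list \<Rightarrow> nat multiset" where
  "msf m a = (\<Sum>i<length m. replicate_mset (a!i) (m!i))"

lemma count_msf: "count (msf m a) x = (\<Sum>i<length m. if m!i = x then a!i else 0)"
  unfolding msf_def count_sum by (intro sum.cong) auto

lemma count_msf_nth:
  assumes "distinct m" "j < length m"
  shows "count (msf m a) (m!j) = a!j"
proof -
  have "count (msf m a) (m!j) = (\<Sum>i<length m. if i = j then a!i else 0)"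
    unfolding count_msf using assms by (intro sum.cong) (auto simp: nth_eq_iff_index_eq)
  also have "\<dots> = a!j" using assms by simp
  finally show ?thesis .
qed

lemma count_msf_notin: "x \<notin> set m \<Longrightarrow> count (msf m a) x = 0"
  unfolding count_msf by (intro sum.neutral) (auto simp: in_set_conv_nth)

lemma set_mset_msf:
  assumes "length a = length m" "\<forall>y\<in>set a. 0 < y" "distinct m"
  shows "set_mset (msf m a) = set m"
proof
  show "set_mset (msf m a) \<subseteq> set m"
    using count_msf_notin by (metis count_eq_zero_iff subsetI)
  show "set m \<subseteq> set_mset (msf m a)"
  proof
    fix x assume "x \<in> set m"
    then obtain j where j: "j < length m" "m!j = x" by (auto simp: in_set_conv_nth)
    then have "count (msf m a) x = a!j" using count_msf_nth assms(3) by blast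
    moreover have "a!j > 0" using assms(1,2) j by auto
    ultimately show "x \<in># msf m a" by (metis count_greater_zero_iff)
  qed
qed

lemma size_msf: "length a = length m \<Longrightarrow> size (msf m a) = sum_list a"
  unfolding msf_def by (simp add: sum_list_sum_nth atLeast0LessThan)

lemma Wm_msf: "Wm (msf m a) = (\<Prod>i<length m. (1 / real (m!i)) ^ (a!i))"
proof -
  have "\<And>n. Wm (\<Sum>i<n. replicate_mset (a!i) (m!i)) = (\<Prod>i<n. (1 / real (m!i)) ^ (a!i))"
  proof -
    fix n show "Wm (\<Sum>i<n. replicate_mset (a!i) (m!i)) = (\<Prod>i<n. (1 / real (m!i)) ^ (a!i))"
      by (induction n) (auto simp: Wm_def)
  qed
  then show ?thesis unfolding msf_def .
qed

lemma msf_count: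
  assumes "distinct m" "set m = set_mset M"
  shows "msf m (map (count M) m) = M"
proof (rule multiset_eqI)
  fix x show "count (msf m (map (count M) m)) x = count M x"
  proof (cases "x \<in> set m")
    case True
    then obtain j where j: "j < length m" "m!j = x" by (auto simp: in_set_conv_nth)
    then show ?thesis using count_msf_nth[OF assms(1) j(1)] by simp
  next
    case False
    then show ?thesis using count_msf_notin assms(2) by (metis count_eq_zero_iff)
  qed
qed

lemma card_set_mset_le: "card (set_mset M) \<le> size M"
proof -
  have "card (set_mset M) = (\<Sum>x\<in>set_mset M. 1)" by simp
  also have "\<dots> \<le> (\<Sum>x\<in>set_mset M. count M x)"
    by (intro sum_mono) (simp add: Suc_le_eq)
  also have "\<dots> = size M" by (simp add: size_multiset_overloaded_eq)
  finally show ?thesis .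
qed

lemma finite_compositions: "finite (compositions r N)"
proof -
  have "compositions r N \<subseteq> {xs. set xs \<subseteq> {..N} \<and> length xs = r}"
    by (auto simp: compositions_def member_le_sum_list)
  moreover have "finite {xs. set xs \<subseteq> {..N} \<and> length xs = r}"
    by (rule finite_lists_length_eq) auto
  ultimately show ?thesis by (rule finite_subset)
qed

lemma A2:
  assumes K: "K \<ge> 1"
  shows "(\<Sum>r\<in>{1..N}. \<phi> r * (\<Sum>a\<in>compositions r N. (\<Sum>m\<in>IB (r-1) K. \<Prod>i<r-1. 1 / real (m!i) ^ (a!i)) * (1 / real K ^ last a)))
       = (\<Sum>M\<in>Dset N K. \<phi> (card (set_mset M)) * Wm M)"
proof -
  define S where "S = Sigma {1..N} (\<lambda>r. Sigma (compositions r N) (\<lambda>a. IB (r-1) K))"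
  define g where "g = (\<lambda>(r,a,m). \<phi> r * ((\<Prod>i<r-1. 1 / real (m!i) ^ (a!i)) * (1 / real K ^ last a)))"
  define sl where "sl M = sorted_list_of_set (set_mset M - {K})" for M :: "nat multiset"
  have "(\<Sum>r\<in>{1..N}. \<phi> r * (\<Sum>a\<in>compositions r N. (\<Sum>m\<in>IB (r-1) K. \<Prod>i<r-1. 1 / real (m!i) ^ (a!i)) * (1 / real K ^ last a)))
      = (\<Sum>x\<in>S. g x)"
  proof -
    have "\<And>r. \<phi> r * (\<Sum>a\<in>compositions r N. (\<Sum>m\<in>IB (r-1) K. \<Prod>i<r-1. 1 / real (m!i) ^ (a!i)) * (1 / real K ^ last a))
       = (\<Sum>(a,m)\<in>Sigma (compositions r N) (\<lambda>a. IB (r-1) K). g (r,a,m))"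
      by (subst sum.Sigma[symmetric]) (auto simp: finite_compositions finite_IB sum_distrib_left sum_distrib_right sum_divide_distrib g_def)
    then have "(\<Sum>r\<in>{1..N}. \<phi> r * (\<Sum>a\<in>compositions r N. (\<Sum>m\<in>IB (r-1) K. \<Prod>i<r-1. 1 / real (m!i) ^ (a!i)) * (1 / real K ^ last a)))
       = (\<Sum>r\<in>{1..N}. \<Sum>am\<in>Sigma (compositions r N) (\<lambda>a. IB (r-1) K). g (r,am))"
      by (simp add: split_def)
    also have "\<dots> = (\<Sum>x\<in>S. g x)"
      unfolding S_def by (subst sum.Sigma) (auto simp: finite_compositions finite_IB split_def)
    finally show ?thesis .
  qed
  also have "\<dots> = (\<Sum>M\<in>Dset N K. \<phi> (card (set_mset M)) * Wm M)"
  proof (rule sum.reindex_bij_witness[where j = "\<lambda>(r,a,m). msf (m@[K]) a"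
        and i = "\<lambda>M. (card (set_mset M), map (count M) (sl M @ [K]), sl M)"])
    fix x assume x: "x \<in> S"
    obtain r a m where ram: "x = (r,a,m)" by (metis prod.exhaust)
    have r: "1 \<le> r" "r \<le> N" and a: "length a = r" "\<forall>y\<in>set a. 0 < y" "sum_list a = N"
      and m: "length m = r - 1" "sorted_wrt (<) m" "0 \<notin> set m" "\<forall>y\<in>set m. y < K"
      using x ram by (auto simp: S_def compositions_def IB_def incr_tuples_def)
    define mm where "mm = m @ [K]"
    have lmm: "length mm = r" using m(1) r(1) by (simp add: mm_def)
    have dmm: "distinct mm" using m(2,4) by (auto simp: mm_def strict_sorted_iff)
    have smm: "set_mset (msf mm a) = set mm" using set_mset_msf[OF _ a(2) dmm] a(1) lmm by simp
    have cmm: "card (set_mset (msf mm a)) = r" using smm dmm lmm by (simp add: distinct_card)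
    have slm: "sl (msf mm a) = m"
    proof -
      have "set mm - {K} = set m" using m(4) by (auto simp: mm_def)
      then show ?thesis using smm strict_sorted_sl[OF m(2)] by (simp add: sl_def)
    qed
    have amap: "map (count (msf mm a)) mm = a"
      by (rule nth_equalityI) (auto simp: lmm a(1) count_msf_nth[OF dmm])
    show "(\<lambda>M. (card (set_mset M), map (count M) (sl M @ [K]), sl M)) ((\<lambda>(r,a,m). msf (m@[K]) a) x) = x"
      using ram cmm slm amap by (simp add: mm_def)
    show "(\<lambda>(r,a,m). msf (m@[K]) a) x \<in> Dset N K"
    proof -
      have "size (msf mm a) = N" using size_msf[of a mm] a lmm by simp
      moreover have "set mm \<subseteq> {1..K}"
      proof
        fix y assume "y \<in> set mm"
        then have "y = K \<or> (y \<in> set m)" by (auto simp: mm_def)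
        then show "y \<in> {1..K}" using m(3,4) K by (metis atLeastAtMost_iff less_imp_le_nat less_one not_less order_refl)
      qed
      ultimately show ?thesis using ram smm by (simp add: Dset_def mm_def)
    qed
    show "(\<lambda>M. \<phi> (card (set_mset M)) * Wm M) ((\<lambda>(r,a,m). msf (m@[K]) a) x) = g x"
    proof -
      have "Wm (msf mm a) = (\<Prod>i<Suc (r-1). (1 / real (mm!i)) ^ (a!i))"
        using Wm_msf lmm r(1) by simp
      also have "\<dots> = (\<Prod>i<r-1. 1 / real (m!i) ^ (a!i)) * (1 / real K ^ last a)"
      proof -
        have "last a = a!(r-1)" using a(1) r(1) by (metis last_conv_nth list.size(3) not_one_le_zero)
        moreover have "\<And>i. i < r - 1 \<Longrightarrow> mm!i = m!i" by (simp add: mm_def nth_append m(1))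
        moreover have "mm!(r-1) = K" by (simp add: mm_def nth_append m(1))
        ultimately show ?thesis by (simp add: power_one_over)
      qed
      finally show ?thesis using ram cmm by (simp add: g_def mm_def)
    qed
  next
    fix M assume M: "M \<in> Dset N K"
    have MN: "size M = N" and MK: "set_mset M \<subseteq> {1..K}" "K \<in># M" using M by (auto simp: Dset_def)
    have fin: "finite (set_mset M - {K})" by simp
    have slp: "sorted_wrt (<) (sl M)" "set (sl M) = set_mset M - {K}"
      using fin by (auto simp: sl_def)
    define mm where "mm = sl M @ [K]"
    have dmm: "distinct mm" using slp by (auto simp: mm_def strict_sorted_iff)
    have smm: "set mm = set_mset M" using slp MK by (auto simp: mm_def)
    have lsl: "length (sl M) = card (set_mset M) - 1"
      using MK(2) by (simp add: sl_def)
    have cpos: "card (set_mset M) \<ge> 1" 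
    proof -
      have "set_mset M \<noteq> {}" using MK(2) by auto
      then show ?thesis by (simp add: Suc_le_eq card_gt_0_iff)
    qed
    show "(\<lambda>(r,a,m). msf (m@[K]) a) ((\<lambda>M. (card (set_mset M), map (count M) (sl M @ [K]), sl M)) M) = M"
      using msf_count[OF dmm smm] by (simp add: mm_def)
    show "(\<lambda>M. (card (set_mset M), map (count M) (sl M @ [K]), sl M)) M \<in> S"
    proof -
      have r: "card (set_mset M) \<in> {1..N}" using cpos card_set_mset_le[of M] MN by simp
      have "sum_list (map (count M) mm) = N"
        using dmm smm MN by (simp add: sum_list_distinct_conv_sum_set size_multiset_overloaded_eq)
      moreover have "length (map (count M) mm) = card (set_mset M)" using lsl cpos by (simp add: mm_def)
      moreover have "\<forall>y\<in>set (map (count M) mm). 0 < y" using smm by auto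
      ultimately have a: "map (count M) mm \<in> compositions (card (set_mset M)) N"
        by (simp add: compositions_def)
      have "sl M \<in> IB (card (set_mset M) - 1) K"
        using slp lsl MK(1) by (force simp: IB_def incr_tuples_def)
      then show ?thesis using r a by (simp add: S_def mm_def)
    qed
  qed
  finally show ?thesis .
qed

lemma finite_identity:
  assumes K: "K \<ge> 1"
  shows "(\<Sum>r = p+1..p+q+1. real ((r-1) choose p) * (\<Sum>a\<in>compositions r (p+q+1).
            (\<Sum>m\<in>IB (r-1) K. \<Prod>i<r-1. 1 / real (m!i) ^ (a!i)) * (1 / real K ^ (last a + n + 1))))
         = cK p K * bK q K / real K ^ (n+2)"
proof -
  let ?N = "p+q+1"
  let ?f = "\<lambda>r. real ((r-1) choose p) * (\<Sum>a\<in>compositions r ?N.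
            (\<Sum>m\<in>IB (r-1) K. \<Prod>i<r-1. 1 / real (m!i) ^ (a!i)) * (1 / real K ^ last a))"
  have "(\<Sum>r = p+1..p+q+1. real ((r-1) choose p) * (\<Sum>a\<in>compositions r (p+q+1).
            (\<Sum>m\<in>IB (r-1) K. \<Prod>i<r-1. 1 / real (m!i) ^ (a!i)) * (1 / real K ^ (last a + n + 1))))
        = (1 / real K ^ (n+1)) * (\<Sum>r = p+1..?N. ?f r)"
  proof -
    have e: "\<And>a. 1 / real K ^ (last a + n + 1) = (1 / real K ^ (n+1)) * (1 / real K ^ last a)"
      by (simp add: power_add)
    show ?thesis unfolding e sum_distrib_left
      by (intro sum.cong refl) (simp add: sum_distrib_left sum_distrib_right mult_ac)
  qed
  also have "(\<Sum>r = p+1..?N. ?f r) = (\<Sum>r = 1..?N. ?f r)"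
    by (rule sum.mono_neutral_left) auto
  also have "\<dots> = (\<Sum>M\<in>Dset ?N K. real ((card (set_mset M) - 1) choose p) * Wm M)"
    by (rule A2[OF K])
  also have "\<dots> = cK p K * bK q K / real K"
    using A1[OF K, of p q] K by simp
  finally show ?thesis using K by (simp add: power_Suc)
qed

lemma has_sum_finite_sum:
  fixes f :: "'i \<Rightarrow> 'a \<Rightarrow> real"
  assumes "finite I" "\<And>i. i \<in> I \<Longrightarrow> (f i has_sum s i) A"
  shows "((\<lambda>x. \<Sum>i\<in>I. f i x) has_sum (\<Sum>i\<in>I. s i)) A"
  using assms
proof (induction I rule: finite_induct)
  case empty then show ?case by simp
next
  case (insert i I)
  then show ?case by (simp add: has_sum_add)
qed

lemma incr_Suc_char:
  "k \<in> incr_tuples (Suc r) \<longleftrightarrow> (\<exists>K m. K \<ge> 1 \<and> m \<in> IB r K \<and> k = m @ [K])"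
proof
  assume k: "k \<in> incr_tuples (Suc r)"
  then have "k \<noteq> []" by (auto simp: incr_tuples_def)
  then obtain m K where mk: "k = m @ [K]" by (metis rev_exhaust)
  then show "\<exists>K m. K \<ge> 1 \<and> m \<in> IB r K \<and> k = m @ [K]"
    using k by (auto simp: incr_tuples_def IB_def sorted_wrt_append Suc_le_eq intro!: exI[of _ K] exI[of _ m])
next
  assume "\<exists>K m. K \<ge> 1 \<and> m \<in> IB r K \<and> k = m @ [K]"
  then show "k \<in> incr_tuples (Suc r)"
    by (auto simp: incr_tuples_def IB_def sorted_wrt_append)
qed

lemma regroup:
  fixes F :: "nat list \<Rightarrow> real"
  assumes nonneg: "\<And>k. k \<in> incr_tuples (Suc r) \<Longrightarrow> F k \<ge> 0"
  assumes g: "((\<lambda>K. \<Sum>m\<in>IB r K. F (m @ [K])) has_sum S) {1..}"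
  shows "(F has_sum S) (incr_tuples (Suc r))"
proof -
  define \<Sigma> where "\<Sigma> = Sigma {1..} (\<lambda>K. IB r K)"
  define \<phi> where "\<phi> = (\<lambda>(K::nat, m::nat list). m @ [K])"
  have inj: "inj_on \<phi> \<Sigma>" by (auto simp: inj_on_def \<phi>_def)
  have img: "\<phi> ` \<Sigma> = incr_tuples (Suc r)"
    using incr_Suc_char[of _ r] by (auto simp: \<Sigma>_def \<phi>_def image_def Bex_def)
  have fib: "\<And>K. K \<in> {1..} \<Longrightarrow> ((\<lambda>m. (F \<circ> \<phi>) (K, m)) has_sum (\<Sum>m\<in>IB r K. F (m @ [K]))) (IB r K)"
    by (simp add: finite_IB \<phi>_def)
  have nn: "\<And>K m. K \<in> {1..} \<Longrightarrow> m \<in> IB r K \<Longrightarrow> (F \<circ> \<phi>) (K, m) \<ge> 0"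
    using nonneg incr_Suc_char by (auto simp: \<phi>_def)
  have summ: "(F \<circ> \<phi>) summable_on \<Sigma>"
    unfolding \<Sigma>_def by (rule summable_on_SigmaI[OF fib]) (use g nn in \<open>auto simp: summable_on_def\<close>)
  have "((F \<circ> \<phi>) has_sum S) \<Sigma>"
    unfolding \<Sigma>_def using has_sum_SigmaI[OF fib g] summ[unfolded \<Sigma>_def] by blast
  then show ?thesis using has_sum_reindex[OF inj] img by metis
qed

lemma listsum_pow:
  fixes f :: "nat \<Rightarrow> real"
  assumes "finite A"
  shows "(\<Sum>xs\<in>{xs. length xs = p \<and> set xs \<subseteq> A}. \<Prod>i<p. f (xs!i)) = (\<Sum>x\<in>A. f x) ^ p"
proof (induction p)
  case 0
  have "{xs. length xs = 0 \<and> set xs \<subseteq> A} = {[]}" by auto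
  then show ?case by simp
next
  case (Suc p)
  let ?L = "\<lambda>p. {xs. length xs = p \<and> set xs \<subseteq> A}"
  have fin: "finite (?L p)" using finite_lists_length_eq[OF assms] by (simp add: conj_commute)
  have eq: "?L (Suc p) = (\<lambda>(x,xs). x # xs) ` (A \<times> ?L p)"
  proof
    show "?L (Suc p) \<subseteq> (\<lambda>(x,xs). x # xs) ` (A \<times> ?L p)"
    proof
      fix ys assume "ys \<in> ?L (Suc p)"
      then obtain x xs where "ys = x # xs" "x \<in> A" "xs \<in> ?L p" by (cases ys) auto
      then show "ys \<in> (\<lambda>(x,xs). x # xs) ` (A \<times> ?L p)" by force
    qed
  qed auto
  have inj: "inj_on (\<lambda>(x,xs). x # xs) (A \<times> ?L p)" by (auto simp: inj_on_def)
  have "(\<Sum>xs\<in>?L (Suc p). \<Prod>i<Suc p. f (xs!i)) = (\<Sum>(x,xs)\<in>A \<times> ?L p. f x * (\<Prod>i<p. f (xs!i)))"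
    unfolding eq by (subst sum.reindex[OF inj]) (simp add: split_def prod.lessThan_Suc_shift del: prod.lessThan_Suc)
  also have "\<dots> = (\<Sum>x\<in>A. f x) * (\<Sum>xs\<in>?L p. \<Prod>i<p. f (xs!i))"
    by (simp add: sum_product sum.cartesian_product)
  finally show ?case using Suc by simp
qed

lemma cK_nonneg: "cK p K \<ge> 0"
  unfolding cK_def by (intro sum_nonneg prod_nonneg) auto

lemma bK_nonneg: "bK q K \<ge> 0"
  unfolding bK_def by (intro sum_nonneg prod_nonneg) auto

lemma harm_eq: "(\<Sum>x\<in>{1..K}. 1 / real x) = harm K"
  by (simp add: harm_def divide_inverse)

lemma cK_le: "cK p K \<le> harm K ^ p"
proof -
  have "cK p K \<le> (\<Sum>xs\<in>{xs. length xs = p \<and> set xs \<subseteq> {1..K}}. \<Prod>i<p. 1 / real (xs!i))"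
    unfolding cK_def
  proof (rule sum_mono2)
    show "finite {xs. length xs = p \<and> set xs \<subseteq> {1..K}}" using finite_lists_length_eq[of "{1..K}"] by (simp add: conj_commute)
    show "IB p K \<subseteq> {xs. length xs = p \<and> set xs \<subseteq> {1..K}}"
    proof
      fix k assume k: "k \<in> IB p K"
      have "set k \<subseteq> {1..K}"
      proof
        fix x assume x: "x \<in> set k"
        have "0 \<notin> set k" "\<forall>x\<in>set k. x < K" using k by (auto simp: IB_def incr_tuples_def)
        then have "x \<noteq> 0" "x < K" using x by (metis, simp)
        then show "x \<in> {1..K}" by simp
      qed
      then show "k \<in> {xs. length xs = p \<and> set xs \<subseteq> {1..K}}" using k by (auto simp: IB_def incr_tuples_def)
    qed
  qed (auto intro!: prod_nonneg)
  also have "\<dots> = harm K ^ p" by (simp only: listsum_pow[OF finite_atLeastAtMost, of "\<lambda>x. 1 / real x"] harm_eq)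
  finally show ?thesis .
qed

lemma bK_le: "bK q K \<le> harm K ^ q"
proof -
  have "bK q K \<le> (\<Sum>xs\<in>{xs. length xs = q \<and> set xs \<subseteq> {1..K}}. \<Prod>i<q. 1 / real (xs!i))"
    unfolding bK_def
  proof (rule sum_mono2)
    show "finite {xs. length xs = q \<and> set xs \<subseteq> {1..K}}" using finite_lists_length_eq[of "{1..K}"] by (simp add: conj_commute)
    show "SL q K \<subseteq> {xs. length xs = q \<and> set xs \<subseteq> {1..K}}" by (auto simp: SL_def)
  qed (auto intro!: prod_nonneg)
  also have "\<dots> = harm K ^ q" by (simp only: listsum_pow[OF finite_atLeastAtMost, of "\<lambda>x. 1 / real x"] harm_eq)
  finally show ?thesis .
qed

lemma harm_le_powr:
  assumes K: "K \<ge> 1" and e: "e > 0"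
  shows "harm K \<le> (1 + 1/e) * real K powr e"
proof -
  have "harm K - ln (real K) \<le> harm 1 - ln (real 1)"
    using euler_mascheroni_sequence_decreasing[of 1 K] K by simp
  then have h: "harm K \<le> 1 + ln (real K)" by (simp add: harm_def)
  have "ln (real K powr e) \<le> real K powr e - 1" using K by (intro ln_le_minus_one) auto
  then have "e * ln (real K) \<le> real K powr e" using K by (simp add: ln_powr)
  then have "ln (real K) \<le> real K powr e / e" using e by (simp add: field_simps)
  moreover have "1 \<le> real K powr e" using K e by (simp add: ge_one_powr_ge_zero)
  ultimately have "harm K \<le> 1 + real K powr e / e" using h by linarith
  also have "\<dots> \<le> real K powr e + real K powr e / e" using \<open>1 \<le> real K powr e\<close> by simp
  also have "\<dots> = (1 + 1/e) * real K powr e" by (simp add: field_simps)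
  finally show ?thesis .
qed

definition uK :: "nat \<Rightarrow> nat \<Rightarrow> nat \<Rightarrow> nat \<Rightarrow> real" where
  "uK n p q K = cK p K * bK q K / real K ^ (n+2)"

lemma uK_nonneg: "uK n p q K \<ge> 0"
  unfolding uK_def using cK_nonneg bK_nonneg by simp

lemma uK_summable: "summable (uK n p q)"
proof -
  define N where "N = p + q"
  define e :: real where "e = 1 / (2 * (real N + 1))"
  define C :: real where "C = (1 + 1/e) ^ N"
  have e: "e > 0" by (simp add: e_def)
  have Ne: "real N * e \<le> 1/2" by (simp add: e_def field_simps)
  have bound: "uK n p q K \<le> C * real K powr (-3/2)" if K: "K \<ge> 1" for K
  proof -
    have hpos: "harm K \<ge> (0::real)" by (rule harm_nonneg)
    have "cK p K * bK q K \<le> harm K ^ p * harm K ^ q"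
      by (intro mult_mono cK_le bK_le) (auto simp: bK_nonneg hpos)
    also have "\<dots> = harm K ^ N" by (simp add: N_def power_add)
    also have "\<dots> \<le> ((1 + 1/e) * real K powr e) ^ N"
      by (intro power_mono harm_le_powr K e hpos)
    also have "\<dots> = C * real K powr (real N * e)"
    proof -
      have "(real K powr e) ^ N = (real K powr e) powr real N" using K by (subst powr_realpow) auto
      also have "\<dots> = real K powr (real N * e)" by (simp add: powr_powr mult.commute)
      finally show ?thesis by (simp add: C_def power_mult_distrib)
    qed
    also have "\<dots> \<le> C * real K powr (1/2)"
      using K Ne e by (intro mult_left_mono powr_mono) (auto simp: C_def)
    finally have A: "cK p K * bK q K \<le> C * real K powr (1/2)" .
    have "uK n p q K \<le> cK p K * bK q K / real K ^ 2"
      unfolding uK_def using K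
      by (intro divide_left_mono mult_nonneg_nonneg cK_nonneg bK_nonneg power_increasing) auto
    also have "\<dots> \<le> C * real K powr (1/2) / real K ^ 2"
      using A K by (intro divide_right_mono) auto
    also have "\<dots> = C * real K powr (-3/2)"
    proof -
      have "real K ^ 2 = real K powr 2" using K by (simp add: powr_realpow)
      moreover have "real K powr (1/2 - 2) = real K powr (1/2) / real K powr 2" by (rule powr_diff)
      moreover have "(1/2 - 2 :: real) = -3/2" by simp
      ultimately show ?thesis by simp
    qed
    finally show ?thesis .
  qed
  have "summable (\<lambda>K. C * real K powr (-3/2))"
    by (intro summable_mult) (simp add: summable_real_powr_iff)
  then show ?thesis
  proof (rule summable_comparison_test'[where N = 1])
    fix K :: nat assume "K \<ge> 1"
    then show "norm (uK n p q K) \<le> C * real K powr (-3/2)" using bound uK_nonneg by simp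
  qed
qed

lemma uK_has_sum: "(uK n p q has_sum (\<Sum>K. uK n p q K)) {1..}"
proof -
  have "(uK n p q has_sum (\<Sum>K. uK n p q K)) UNIV"
    by (rule sums_nonneg_imp_has_sum[OF summable_sums[OF uK_summable] uK_nonneg])
  moreover have z: "\<And>x. x \<in> UNIV - {1..} \<Longrightarrow> uK n p q x = 0" by (auto simp: uK_def)
  ultimately show ?thesis
    by (rule has_sum_cong_neutral[THEN iffD2, rotated -1]) auto
qed

lemma Gfun_eq: "Gfun n p q = (\<Sum>K. uK n p q K)"
proof -
  define F where "F = (\<lambda>k::nat list. (\<Prod>i<p. 1 / real (k ! i)) * (1 / real (k ! p) ^ (n + 2)) *
      (\<Sum>l \<in> {l. length l = q \<and> sorted l \<and> set l \<subseteq> {1..k ! p}}. \<Prod>i<q. 1 / real (l ! i)))"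
  have "(F has_sum (\<Sum>K. uK n p q K)) (incr_tuples (Suc p))"
  proof (rule regroup)
    show "\<And>k. k \<in> incr_tuples (Suc p) \<Longrightarrow> 0 \<le> F k"
      unfolding F_def by (intro mult_nonneg_nonneg sum_nonneg prod_nonneg) auto
    have "(\<Sum>m\<in>IB p K. F (m @ [K])) = uK n p q K" for K
    proof -
      have "(\<Sum>m\<in>IB p K. F (m @ [K])) = (\<Sum>m\<in>IB p K. (\<Prod>i<p. 1 / real (m ! i)) * (1 / real K ^ (n + 2)) * bK q K)"
      proof (rule sum.cong[OF refl])
        fix m assume "m \<in> IB p K"
        then have lm: "length m = p" by (simp add: IB_def incr_tuples_def)
        then have "(\<Prod>i<p. 1 / real ((m @ [K]) ! i)) = (\<Prod>i<p. 1 / real (m ! i))"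
          by (intro prod.cong) (auto simp: nth_append)
        then show "F (m @ [K]) = (\<Prod>i<p. 1 / real (m ! i)) * (1 / real K ^ (n + 2)) * bK q K"
        proof -
          have "(m @ [K]) ! p = K" using lm by (metis nth_append_length)
          then show ?thesis using \<open>(\<Prod>i<p. 1 / real ((m @ [K]) ! i)) = _\<close> by (simp add: F_def bK_def SL_def)
        qed
      qed
      also have "\<dots> = uK n p q K" by (simp add: uK_def cK_def sum_distrib_right sum_divide_distrib)
      finally show ?thesis .
    qed
    then show "((\<lambda>K. \<Sum>m\<in>IB p K. F (m @ [K])) has_sum (\<Sum>K. uK n p q K)) {1..}"
      using uK_has_sum by simp
  qed
  then show ?thesis unfolding Gfun_def F_def by (simp add: has_sum_iff)
qed

lemma RHS_eq:
  "(\<Sum>r = p + 1..p + q + 1. real ((r - 1) choose p) *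
      (\<Sum>a \<in> compositions r (p + q + 1). mzv (butlast a @ [last a + n + 1]))) = (\<Sum>K. uK n p q K)"
proof -
  define N where "N = p + q + 1"
  define ga where "ga a K = (\<Sum>m\<in>IB (length a - 1) K. \<Prod>i<length a - 1. 1 / real (m!i) ^ (a!i)) * (1 / real K ^ (last a + n + 1))"
    for a :: "nat list" and K :: nat
  have ga_nn: "ga a K \<ge> 0" for a K
    unfolding ga_def by (intro mult_nonneg_nonneg sum_nonneg prod_nonneg) auto
  have fid: "uK n p q K = (\<Sum>r = p+1..N. real ((r-1) choose p) * (\<Sum>a\<in>compositions r N. ga a K))" if K: "K \<ge> 1" for K
  proof -
    have "(\<Sum>r = p+1..N. real ((r-1) choose p) * (\<Sum>a\<in>compositions r N. ga a K)) =
      (\<Sum>r = p+1..p+q+1. real ((r-1) choose p) * (\<Sum>a\<in>compositions r (p+q+1).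
            (\<Sum>m\<in>IB (r-1) K. \<Prod>i<r-1. 1 / real (m!i) ^ (a!i)) * (1 / real K ^ (last a + n + 1))))"
      unfolding N_def ga_def by (intro sum.cong refl arg_cong2[where f = "(*)"]) (auto simp: compositions_def)
    also have "\<dots> = uK n p q K" using finite_identity[OF K] by (simp add: uK_def)
    finally show ?thesis by simp
  qed
  have ga_le: "ga a K \<le> uK n p q K" if r: "r \<in> {p+1..N}" and a: "a \<in> compositions r N" and K: "K \<ge> 1" for r a K
  proof -
    have "0 < (r-1) choose p" using r by (intro zero_less_binomial) auto
    then have c1: "real ((r-1) choose p) \<ge> 1" by linarith
    have "ga a K \<le> real ((r-1) choose p) * ga a K"
      using mult_right_mono[OF c1 ga_nn[of a K]] by simp
    also have "\<dots> \<le> real ((r-1) choose p) * (\<Sum>a\<in>compositions r N. ga a K)"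
      using a ga_nn by (intro mult_left_mono member_le_sum finite_compositions) auto
    also have "\<dots> \<le> (\<Sum>r = p+1..N. real ((r-1) choose p) * (\<Sum>a\<in>compositions r N. ga a K))"
      using r ga_nn by (intro member_le_sum[where f = "\<lambda>r. real ((r-1) choose p) * (\<Sum>a\<in>compositions r N. ga a K)"]
          mult_nonneg_nonneg sum_nonneg) auto
    finally show ?thesis using fid[OF K] by simp
  qed
  have mz: "(ga a has_sum mzv (butlast a @ [last a + n + 1])) {1..}" if r: "r \<in> {p+1..N}" and a: "a \<in> compositions r N" for r a
  proof -
    have la: "length a = r" and rpos: "r \<ge> 1" using a r by (auto simp: compositions_def)
    define r' where "r' = r - 1"
    have rr: "r = Suc r'" using rpos by (simp add: r'_def)
    define a' where "a' = butlast a @ [last a + n + 1]"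
    have la': "length a' = Suc r'" using la rr by (simp add: a'_def)
    have summ: "ga a summable_on {1..}"
      by (rule summable_on_comparison_test[OF has_sum_imp_summable[OF uK_has_sum]])
         (use ga_le[OF r a] ga_nn in auto)
    define F where "F k = (\<Prod>i<length a'. 1 / real (k!i) ^ (a'!i))" for k :: "nat list"
    have "(F has_sum (infsum (ga a) {1..})) (incr_tuples (Suc r'))"
    proof (rule regroup)
      show "\<And>k. k \<in> incr_tuples (Suc r') \<Longrightarrow> 0 \<le> F k"
        unfolding F_def by (intro prod_nonneg) auto
      have "(\<Sum>m\<in>IB r' K. F (m @ [K])) = ga a K" for K
      proof -
        have "(\<Sum>m\<in>IB r' K. F (m @ [K])) = (\<Sum>m\<in>IB r' K. (\<Prod>i<r'. 1 / real (m!i) ^ (a!i)) * (1 / real K ^ (last a + n + 1)))"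
        proof (rule sum.cong[OF refl])
          fix m assume "m \<in> IB r' K"
          then have lm: "length m = r'" by (simp add: IB_def incr_tuples_def)
          have "F (m @ [K]) = (\<Prod>i<r'. 1 / real ((m @ [K])!i) ^ (a'!i)) * (1 / real ((m @ [K])!r') ^ (a'!r'))"
            unfolding F_def la' by simp
          also have "(\<Prod>i<r'. 1 / real ((m @ [K])!i) ^ (a'!i)) = (\<Prod>i<r'. 1 / real (m!i) ^ (a!i))"
            using lm la rr by (intro prod.cong) (auto simp: nth_append a'_def nth_butlast)
          also have "(m @ [K])!r' = K" "a'!r' = last a + n + 1" using lm la rr by (auto simp: nth_append a'_def)
          ultimately show "F (m @ [K]) = (\<Prod>i<r'. 1 / real (m!i) ^ (a!i)) * (1 / real K ^ (last a + n + 1))" by simp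
        qed
        also have "\<dots> = ga a K" by (simp add: ga_def la r'_def sum_distrib_right sum_divide_distrib)
        finally show ?thesis .
      qed
      then show "((\<lambda>K. \<Sum>m\<in>IB r' K. F (m @ [K])) has_sum infsum (ga a) {1..}) {1..}"
        using summ by simp
    qed
    then have "mzv a' = infsum (ga a) {1..}"
      unfolding mzv_def la' F_def[abs_def] by (simp add: has_sum_iff)
    then show ?thesis using summ unfolding a'_def by (simp add: has_sum_iff)
  qed
  have "((\<lambda>K. \<Sum>r = p+1..N. real ((r-1) choose p) * (\<Sum>a\<in>compositions r N. ga a K)) has_sum
        (\<Sum>r = p+1..N. real ((r-1) choose p) * (\<Sum>a\<in>compositions r N. mzv (butlast a @ [last a + n + 1])))) {1..}"
    by (intro has_sum_finite_sum has_sum_cmult_right finite_compositions mz) auto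
  moreover have "((\<lambda>K. \<Sum>r = p+1..N. real ((r-1) choose p) * (\<Sum>a\<in>compositions r N. ga a K)) has_sum (\<Sum>K. uK n p q K)) {1..}"
    using uK_has_sum by (rule has_sum_cong[THEN iffD1, rotated]) (use fid in auto)
  ultimately show ?thesis unfolding N_def using has_sum_unique by blast
qed

lemma lim0_pow_ln:
  "((\<lambda>s::real. s ^ Suc j * (-ln s) ^ k) \<longlongrightarrow> 0) (at_right 0)"
proof -
  define m where "m = real (Suc j)"
  have m: "m > 0" by (simp add: m_def)
  have "filterlim (\<lambda>s::real. m * ln s) at_bot (at_right 0)"
    by (rule filterlim_tendsto_pos_mult_at_bot[OF tendsto_const m ln_at_0])
  then have "filterlim (\<lambda>s::real. - (m * ln s)) at_top (at_right 0)"
    by (simp add: filterlim_uminus_at_bot)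
  then have "((\<lambda>s. (- (m * ln s)) ^ k / exp (- (m * ln s))) \<longlongrightarrow> 0) (at_right 0)"
    by (rule filterlim_compose[OF tendsto_power_div_exp_0])
  then have "((\<lambda>s. (1 / m ^ k) * ((- (m * ln s)) ^ k / exp (- (m * ln s)))) \<longlongrightarrow> 0) (at_right 0)"
    by (rule tendsto_mult_right_zero)
  moreover have "eventually (\<lambda>s. (1 / m ^ k) * ((- (m * ln s)) ^ k / exp (- (m * ln s))) = s ^ Suc j * (-ln s) ^ k) (at_right 0)"
    using eventually_at_right_less[of "0::real"]
  proof (rule eventually_mono)
    fix s :: real assume s: "0 < s"
    have "exp (m * ln s) = s ^ Suc j"
      unfolding m_def by (simp only: exp_of_nat_mult exp_ln[OF s])
    then have "exp (- (m * ln s)) = inverse (s ^ Suc j)" by (simp add: exp_minus)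
    moreover have "(- (m * ln s)) ^ k = m ^ k * (- ln s) ^ k" by (simp add: power_mult_distrib[symmetric])
    ultimately show "(1 / m ^ k) * ((- (m * ln s)) ^ k / exp (- (m * ln s))) = s ^ Suc j * (-ln s) ^ k"
      using m s by (simp add: field_simps)
  qed
  ultimately show ?thesis by (rule Lim_transform_eventually)
qed

fun FL :: "nat \<Rightarrow> nat \<Rightarrow> real \<Rightarrow> real" where
  "FL j 0 s = s ^ Suc j / real (Suc j)"
| "FL j (Suc n) s = s ^ Suc j * (-ln s) ^ Suc n / real (Suc j) + real (Suc n) / real (Suc j) * FL j n s"

lemma dpow: "((\<lambda>s::real. s ^ Suc j) has_real_derivative real (Suc j) * s ^ j) (at s)"
  using DERIV_pow[of "Suc j" s UNIV] by simp

lemma FL_deriv: "s > 0 \<Longrightarrow> (FL j n has_real_derivative s ^ j * (-ln s) ^ n) (at s)"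
proof (induction n)
  case 0
  have "((\<lambda>s::real. s ^ Suc j / real (Suc j)) has_real_derivative real (Suc j) * s ^ j / real (Suc j)) (at s)"
    by (rule DERIV_cdivide[OF dpow])
  then show ?case by simp
next
  case (Suc n)
  have "((\<lambda>s. s ^ Suc j * (-ln s) ^ Suc n / real (Suc j)) has_real_derivative
        (real (Suc j) * s ^ j * (-ln s) ^ Suc n + s ^ Suc j * (real (Suc n) * (-ln s) ^ n * (- (1 / s)))) / real (Suc j)) (at s)"
    using Suc.prems by (auto intro!: derivative_eq_intros dpow simp del: power_Suc of_nat_Suc)
  moreover have "(real (Suc j) * s ^ j * (-ln s) ^ Suc n + s ^ Suc j * (real (Suc n) * (-ln s) ^ n * (- (1 / s)))) / real (Suc j)
     = s ^ j * (-ln s) ^ Suc n - real (Suc n) / real (Suc j) * (s ^ j * (-ln s) ^ n)"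
    using Suc.prems by (simp add: field_simps del: of_nat_Suc)
  ultimately have "((\<lambda>s. s ^ Suc j * (-ln s) ^ Suc n / real (Suc j)) has_real_derivative
        s ^ j * (-ln s) ^ Suc n - real (Suc n) / real (Suc j) * (s ^ j * (-ln s) ^ n)) (at s)"
    by simp
  from DERIV_add[OF this DERIV_cmult[OF Suc.IH[OF Suc.prems], of "real (Suc n) / real (Suc j)"]]
  show ?case by (simp add: algebra_simps)
qed

lemma FL_lim0: "((FL j n) \<longlongrightarrow> 0) (at_right 0)"
proof (induction n)
  case 0
  have "((\<lambda>s::real. s ^ Suc j / real (Suc j)) \<longlongrightarrow> 0 ^ Suc j / real (Suc j)) (at_right 0)"
    by (intro tendsto_intros) simp
  then show ?case by simp
next
  case (Suc n)
  have L: "((\<lambda>s. s ^ Suc j * (-ln s) ^ Suc n * (1 / real (Suc j)) + real (Suc n) / real (Suc j) * FL j n s) \<longlongrightarrow> 0 + 0) (at_right 0)"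
    by (rule tendsto_add[OF tendsto_mult_left_zero[OF lim0_pow_ln] tendsto_mult_right_zero[OF Suc.IH]])
  have eq: "FL j (Suc n) = (\<lambda>s. s ^ Suc j * (-ln s) ^ Suc n * (1 / real (Suc j)) + real (Suc n) / real (Suc j) * FL j n s)"
    by (simp add: fun_eq_iff)
  show ?case unfolding eq using L by (simp only: add_0)
qed

lemma FL_one: "FL j n 1 = fact n / real (Suc j) ^ Suc n"
  by (induction n) (auto simp: field_simps)

lemma mono_log_integral:
  shows "set_integrable lborel {0<..<1::real} (\<lambda>s. s ^ j * (-ln s) ^ n)"
    and "(LINT s:{0<..<1}|lborel. s ^ j * (-ln s) ^ n) = fact n / real (Suc j) ^ Suc n"
proof -
  have e: "einterval 0 1 = {0<..<1::real}" by (auto simp: einterval_def)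
  have A: "((FL j n \<circ> real_of_ereal) \<longlongrightarrow> 0) (at_right 0)"
    unfolding zero_ereal_def ereal_tendsto_simps by (rule FL_lim0)
  have B: "((FL j n \<circ> real_of_ereal) \<longlongrightarrow> FL j n 1) (at_left 1)"
  proof -
    have "isCont (FL j n) 1" using FL_deriv[of 1 j n] by (auto intro: DERIV_isCont)
    then have "((FL j n) \<longlongrightarrow> FL j n 1) (at_left 1)"
      by (simp add: isCont_def filterlim_at_split)
    then show ?thesis unfolding one_ereal_def ereal_tendsto_simps .
  qed
  have F: "\<And>x. 0 < ereal x \<Longrightarrow> ereal x < 1 \<Longrightarrow> DERIV (FL j n) x :> x ^ j * (-ln x) ^ n"
    by (rule FL_deriv) simp
  have C: "\<And>x. 0 < ereal x \<Longrightarrow> ereal x < 1 \<Longrightarrow> isCont (\<lambda>s. s ^ j * (-ln s) ^ n) x"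
    by (auto intro!: continuous_intros)
  have N: "AE x in lborel. 0 < ereal x \<longrightarrow> ereal x < 1 \<longrightarrow> 0 \<le> x ^ j * (-ln x) ^ n"
    by (auto intro!: mult_nonneg_nonneg zero_le_power simp: ln_less_zero_iff less_imp_le)
  have "0 < (1::ereal)" by simp
  note I = interval_integral_FTC_nonneg[OF this F C N A B]
  show "set_integrable lborel {0<..<1::real} (\<lambda>s. s ^ j * (-ln s) ^ n)" using I(1) e by simp
  have "(LBINT s=0..1. s ^ j * (-ln s) ^ n) = FL j n 1" using I(2) by simp
  then show "(LINT s:{0<..<1}|lborel. s ^ j * (-ln s) ^ n) = fact n / real (Suc j) ^ Suc n"
    by (simp add: interval_lebesgue_integral_def e FL_one zero_ereal_def[symmetric])
qed

definition fa :: "nat \<Rightarrow> nat \<Rightarrow> real" where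
  "fa K q = (\<Sum>i<K. real (K choose Suc i) * (-1)^i / real (Suc i) ^ q)"

lemma absorb_aux:
  fixes a b x y c :: real
  assumes "a > 0" "b > 0" "a * y = b * x"
  shows "x * c / a ^ Suc q = y * c / a ^ q / b"
proof -
  have "x = a * y / b" using assms by (simp add: field_simps)
  then show ?thesis using assms by (simp add: field_simps)
qed

lemma absorb:
  "(\<Sum>i<Suc K. real (K choose i) * (-1)^i / real (Suc i) ^ Suc q) = fa (Suc K) q / real (Suc K)"
proof -
  have t: "real (K choose i) * (-1)^i / real (Suc i) ^ Suc q =
        real (Suc K choose Suc i) * (-1)^i / real (Suc i) ^ q / real (Suc K)" for i
  proof -
    have "real (Suc i) * real (Suc K choose Suc i) = real (Suc K) * real (K choose i)"
      using Suc_times_binomial[of i K] by (metis of_nat_mult)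
    from absorb_aux[OF _ _ this, of "(-1)^i" q] show ?thesis by (simp del: binomial_Suc_Suc of_nat_Suc)
  qed
  show ?thesis unfolding fa_def sum_divide_distrib by (rule sum.cong[OF refl]) (rule t)
qed

lemma fa_rec: "fa (Suc K) (Suc q) = fa K (Suc q) + fa (Suc K) q / real (Suc K)"
proof -
  have "fa (Suc K) (Suc q) = (\<Sum>i<Suc K. real (K choose i) * (-1)^i / real (Suc i) ^ Suc q)
       + (\<Sum>i<Suc K. real (K choose Suc i) * (-1)^i / real (Suc i) ^ Suc q)"
  proof -
    have "(\<Sum>i<Suc K. real (Suc K choose Suc i) * (-1)^i / real (Suc i) ^ Suc q) =
          (\<Sum>i<Suc K. real (K choose i) * (-1)^i / real (Suc i) ^ Suc q + real (K choose Suc i) * (-1)^i / real (Suc i) ^ Suc q)"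
      by (intro sum.cong refl) (simp add: add_divide_distrib distrib_right del: of_nat_Suc)
    then show ?thesis unfolding fa_def by (simp only: sum.distrib)
  qed
  also have "(\<Sum>i<Suc K. real (K choose Suc i) * (-1)^i / real (Suc i) ^ Suc q) = fa K (Suc q)"
    by (simp add: fa_def)
  finally show ?thesis using absorb[of K q] by simp
qed

lemma fa0: "K \<ge> 1 \<Longrightarrow> fa K 0 = 1"
proof -
  assume "K \<ge> 1"
  then obtain K' where K: "K = Suc K'" by (metis Suc_le_D One_nat_def)
  have "(\<Sum>i\<le>Suc K'. (-1)^i * real (Suc K' choose i)) = 0"
    by (rule choose_alternating_sum) simp
  then have "1 + (\<Sum>i\<le>K'. (-1)^Suc i * real (Suc K' choose Suc i)) = 0"
    by (simp only: sum.atMost_Suc_shift) simp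
  then have "(\<Sum>i\<le>K'. (-1)^i * real (Suc K' choose Suc i)) = 1"
    by (simp add: sum_negf)
  then show ?thesis unfolding fa_def K by (simp add: lessThan_Suc_atMost mult.commute)
qed

lemma SL_0: "SL 0 K = {[]}" by (auto simp: SL_def)
lemma bK_0: "bK 0 K = 1" by (simp add: bK_def SL_0)
lemma SL_Suc_0: "SL (Suc q) 0 = {}" by (auto simp: SL_def)
lemma bK_Suc_0: "bK (Suc q) 0 = 0" by (simp add: bK_def SL_Suc_0)

lemma bK_rec: "bK (Suc q) (Suc K) = bK (Suc q) K + bK q (Suc K) / real (Suc K)"
proof -
  have eq: "SL (Suc q) (Suc K) = SL (Suc q) K \<union> (\<lambda>l. l @ [Suc K]) ` SL q (Suc K)"
  proof
    show "SL (Suc q) (Suc K) \<subseteq> SL (Suc q) K \<union> (\<lambda>l. l @ [Suc K]) ` SL q (Suc K)"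
    proof
      fix l assume l: "l \<in> SL (Suc q) (Suc K)"
      show "l \<in> SL (Suc q) K \<union> (\<lambda>l. l @ [Suc K]) ` SL q (Suc K)"
      proof (cases "Suc K \<in> set l")
        case False
        then have "set l \<subseteq> {1..K}" using l by (auto simp: SL_def le_Suc_eq)
        then show ?thesis using l by (auto simp: SL_def)
      next
        case True
        then have "l \<noteq> []" by auto
        then obtain l' x where lx: "l = l' @ [x]" by (metis rev_exhaust)
        have srt: "sorted l'" "\<forall>y\<in>set l'. y \<le> x" using l lx by (auto simp: SL_def sorted_append)
        have "x \<le> Suc K" using l lx by (auto simp: SL_def)
        moreover have "Suc K \<le> x" using True lx srt(2) by auto
        ultimately have x: "x = Suc K" by simp
        have "l' \<in> SL q (Suc K)" using l lx srt by (auto simp: SL_def)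
        then show ?thesis using lx x by blast
      qed
    qed
  next
    show "SL (Suc q) K \<union> (\<lambda>l. l @ [Suc K]) ` SL q (Suc K) \<subseteq> SL (Suc q) (Suc K)"
      by (fastforce simp: SL_def sorted_append)
  qed
  have disj: "SL (Suc q) K \<inter> (\<lambda>l. l @ [Suc K]) ` SL q (Suc K) = {}"
    by (auto simp: SL_def)
  have inj: "inj_on (\<lambda>l. l @ [Suc K]) (SL q (Suc K))" by (auto simp: inj_on_def)
  have "bK (Suc q) (Suc K) = bK (Suc q) K + (\<Sum>l\<in>SL q (Suc K). \<Prod>i<Suc q. 1 / real ((l @ [Suc K]) ! i))"
    unfolding bK_def eq
    by (subst sum.union_disjoint) (auto simp: finite_SL disj sum.reindex[OF inj])
  also have "(\<Sum>l\<in>SL q (Suc K). \<Prod>i<Suc q. 1 / real ((l @ [Suc K]) ! i)) = bK q (Suc K) / real (Suc K)"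
  proof -
    have "(\<Prod>i<Suc q. 1 / real ((l @ [Suc K]) ! i)) = (\<Prod>i<q. 1 / real (l ! i)) / real (Suc K)" if "l \<in> SL q (Suc K)" for l
    proof -
      have lq: "length l = q" using that by (simp add: SL_def)
      have "(\<Prod>i<q. 1 / real ((l @ [Suc K]) ! i)) = (\<Prod>i<q. 1 / real (l ! i))"
        using lq by (intro prod.cong) (auto simp: nth_append)
      moreover have "(l @ [Suc K]) ! q = Suc K" using lq by (metis nth_append_length)
      ultimately show ?thesis by (simp del: of_nat_Suc)
    qed
    then show ?thesis unfolding bK_def by (simp add: sum_divide_distrib del: of_nat_Suc)
  qed
  finally show ?thesis .
qed

lemma fa_bK: "K \<ge> 1 \<or> q \<ge> 1 \<Longrightarrow> fa K q = bK q K"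
proof (induction q arbitrary: K)
  case 0
  then show ?case by (simp add: fa0 bK_0)
next
  case (Suc q)
  note outer = Suc.IH
  show ?case
  proof (induction K)
    case 0
    then show ?case by (simp add: fa_def bK_Suc_0)
  next
    case (Suc K)
    then show ?case using outer[of "Suc K"] by (simp add: fa_rec bK_rec del: of_nat_Suc)
  qed
qed

lemma stepC_int:
  shows "set_integrable lborel {0<..<1::real} (\<lambda>s. (1 - s) ^ K * (-ln s) ^ q)"
    and "(LINT s:{0<..<1}|lborel. (1 - s) ^ K * (-ln s) ^ q) = fact q * bK q (Suc K) / real (Suc K)"
proof -
  let ?A = "{0<..<1::real}"
  have bin: "(1 - s) ^ K * (-ln s) ^ q = (\<Sum>i\<le>K. (real (K choose i) * (-1)^i) * (s ^ i * (-ln s) ^ q))" for s :: real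
  proof -
    have "(1 - s) ^ K = (-s + 1) ^ K" by simp
    also have "\<dots> = (\<Sum>i\<le>K. real (K choose i) * (-s) ^ i * 1 ^ (K - i))" by (rule binomial_ring)
    also have "\<dots> = (\<Sum>i\<le>K. real (K choose i) * (-1)^i * s ^ i)"
      by (intro sum.cong refl) (simp add: power_minus[of s])
    finally have "(1 - s) ^ K = (\<Sum>i\<le>K. real (K choose i) * (-1)^i * s ^ i)" .
    then show ?thesis by (simp only: sum_distrib_right mult.assoc)
  qed
  have int_i: "integrable lborel (\<lambda>s. indicator ?A s *\<^sub>R (s ^ i * (-ln s) ^ q))" for i
    using mono_log_integral(1)[of i q] by (simp add: set_integrable_def)
  have eq: "(\<lambda>s. indicator ?A s *\<^sub>R ((1 - s) ^ K * (-ln s) ^ q)) =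
      (\<lambda>s. \<Sum>i\<le>K. (real (K choose i) * (-1)^i) * (indicator ?A s *\<^sub>R (s ^ i * (-ln s) ^ q)))"
  proof
    fix s :: real
    show "indicator ?A s *\<^sub>R ((1 - s) ^ K * (-ln s) ^ q) =
      (\<Sum>i\<le>K. (real (K choose i) * (-1)^i) * (indicator ?A s *\<^sub>R (s ^ i * (-ln s) ^ q)))"
      unfolding bin real_scaleR_def sum_distrib_left by (intro sum.cong refl) (simp only: mult.left_commute)
  qed
  show "set_integrable lborel ?A (\<lambda>s. (1 - s) ^ K * (-ln s) ^ q)"
    unfolding set_integrable_def eq using int_i by auto
  have "(LINT s:?A|lborel. (1 - s) ^ K * (-ln s) ^ q) =
        (\<Sum>i\<le>K. (real (K choose i) * (-1)^i) * (fact q / real (Suc i) ^ Suc q))"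
  proof -
    have G: "(LBINT s. indicator ?A s *\<^sub>R (s ^ i * (-ln s) ^ q)) = fact q / real (Suc i) ^ Suc q" for i
      using mono_log_integral(2)[of i q] by (simp add: set_lebesgue_integral_def)
    have "(LBINT s. (\<Sum>i\<le>K. (real (K choose i) * (-1)^i) * (indicator ?A s *\<^sub>R (s ^ i * (-ln s) ^ q)))) =
      (\<Sum>i\<le>K. (LBINT s. (real (K choose i) * (-1)^i) * (indicator ?A s *\<^sub>R (s ^ i * (-ln s) ^ q))))"
      by (rule Bochner_Integration.integral_sum[where f = "\<lambda>i s. (real (K choose i) * (-1)^i) * (indicator ?A s *\<^sub>R (s ^ i * (-ln s) ^ q))"]) (intro Bochner_Integration.integrable_mult_right int_i)
    also have "\<dots> = (\<Sum>i\<le>K. (real (K choose i) * (-1)^i) * (fact q / real (Suc i) ^ Suc q))"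
      by (intro sum.cong refl) (simp only: Bochner_Integration.integral_mult_right[OF int_i] G)
    finally show ?thesis unfolding set_lebesgue_integral_def eq .
  qed
  also have "\<dots> = fact q * (\<Sum>i<Suc K. real (K choose i) * (-1)^i / real (Suc i) ^ Suc q)"
    by (simp add: sum_distrib_left lessThan_Suc_atMost field_simps del: of_nat_Suc)
  also have "\<dots> = fact q * bK q (Suc K) / real (Suc K)"
    using absorb[of K q] fa_bK[of "Suc K" q] by simp
  finally show "(LINT s:?A|lborel. (1 - s) ^ K * (-ln s) ^ q) = fact q * bK q (Suc K) / real (Suc K)" .
qed

lemma IB_0: "IB 0 K = {[]}" by (auto simp: IB_def incr_tuples_def)
lemma cK_0: "cK 0 K = 1" by (simp add: cK_def IB_0)

lemma IB_Suc_le1: "K \<le> 1 \<Longrightarrow> IB (Suc p) K = {}"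
proof (rule ccontr)
  assume K: "K \<le> 1" and "IB (Suc p) K \<noteq> {}"
  then obtain k where k: "k \<in> IB (Suc p) K" by blast
  then have "k \<noteq> []" by (auto simp: IB_def incr_tuples_def)
  then obtain x where x: "x \<in> set k" by (meson list.set_sel(1))
  have k0: "0 \<notin> set k" "\<forall>x\<in>set k. x < K" using k by (auto simp: IB_def incr_tuples_def)
  then have "x \<noteq> 0" "x < K" using x by (metis, simp)
  then show False using K by simp
qed

lemma cK_rec: "cK (Suc p) (Suc K) = cK (Suc p) K + cK p K / real K"
proof (cases "K = 0")
  case True
  then show ?thesis by (simp add: cK_def IB_Suc_le1)
next
  case False
  have eq: "IB (Suc p) (Suc K) = IB (Suc p) K \<union> (\<lambda>m. m @ [K]) ` IB p K"
  proof
    show "IB (Suc p) (Suc K) \<subseteq> IB (Suc p) K \<union> (\<lambda>m. m @ [K]) ` IB p K"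
    proof
      fix k assume k: "k \<in> IB (Suc p) (Suc K)"
      then have "k \<in> incr_tuples (Suc p)" by (simp add: IB_def)
      then obtain x m where xm: "x \<ge> 1" "m \<in> IB p x" "k = m @ [x]" using incr_Suc_char by blast
      have "x < Suc K" using k xm by (auto simp: IB_def)
      then have "x = K \<or> x < K" by linarith
      then show "k \<in> IB (Suc p) K \<union> (\<lambda>m. m @ [K]) ` IB p K"
      proof
        assume "x = K" then show ?thesis using xm by blast
      next
        assume "x < K"
        then show ?thesis using k xm by (auto simp: IB_def)
      qed
    qed
    show "IB (Suc p) K \<union> (\<lambda>m. m @ [K]) ` IB p K \<subseteq> IB (Suc p) (Suc K)"
    proof
      fix k assume "k \<in> IB (Suc p) K \<union> (\<lambda>m. m @ [K]) ` IB p K"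
      then show "k \<in> IB (Suc p) (Suc K)"
      proof
        assume "k \<in> IB (Suc p) K" then show ?thesis by (auto simp: IB_def)
      next
        assume "k \<in> (\<lambda>m. m @ [K]) ` IB p K"
        then obtain m where m: "m \<in> IB p K" "k = m @ [K]" by blast
        then have "k \<in> incr_tuples (Suc p)" using incr_Suc_char False by (metis less_one not_le)
        then show ?thesis using m by (auto simp: IB_def)
      qed
    qed
  qed
  have disj: "IB (Suc p) K \<inter> (\<lambda>m. m @ [K]) ` IB p K = {}" by (auto simp: IB_def)
  have inj: "inj_on (\<lambda>m. m @ [K]) (IB p K)" by (auto simp: inj_on_def)
  have "cK (Suc p) (Suc K) = cK (Suc p) K + (\<Sum>m\<in>IB p K. \<Prod>i<Suc p. 1 / real ((m @ [K]) ! i))"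
    unfolding cK_def eq
    by (subst sum.union_disjoint) (auto simp: finite_IB disj sum.reindex[OF inj])
  also have "(\<Sum>m\<in>IB p K. \<Prod>i<Suc p. 1 / real ((m @ [K]) ! i)) = cK p K / real K"
  proof -
    have "(\<Prod>i<Suc p. 1 / real ((m @ [K]) ! i)) = (\<Prod>i<p. 1 / real (m ! i)) / real K" if "m \<in> IB p K" for m
    proof -
      have lp: "length m = p" using that by (simp add: IB_def incr_tuples_def)
      have "(\<Prod>i<p. 1 / real ((m @ [K]) ! i)) = (\<Prod>i<p. 1 / real (m ! i))"
        using lp by (intro prod.cong) (auto simp: nth_append)
      moreover have "(m @ [K]) ! p = K" using lp by (metis nth_append_length)
      ultimately show ?thesis by simp
    qed
    then show ?thesis unfolding cK_def by (simp add: sum_divide_distrib)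
  qed
  finally show ?thesis .
qed

definition dK :: "nat \<Rightarrow> nat \<Rightarrow> real" where "dK p N = cK p N / real N"

lemma cK_partial: "cK (Suc p) (Suc K) = (\<Sum>N\<le>K. dK p N)"
proof (induction K)
  case 0
  then show ?case by (simp add: cK_def IB_Suc_le1 dK_def)
next
  case (Suc K)
  then show ?case using cK_rec[of p "Suc K"] by (simp add: dK_def)
qed

lemma dK_nonneg: "dK p N \<ge> 0" by (simp add: dK_def cK_nonneg)

lemma stepA:
  assumes "0 \<le> x" "x < 1"
  shows "(\<lambda>K. cK p (Suc K) * x ^ K) sums ((- ln (1 - x)) ^ p / (fact p * (1 - x)))"
  using assms
proof (induction p arbitrary: x)
  case 0
  then show ?case using geometric_sums[of x] by (simp add: cK_0)
next
  case (Suc p)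
  define \<Phi> where "\<Phi> x = (- ln (1 - x)) ^ Suc p / fact (Suc p)" for x :: real
  define G where "G x = (\<Sum>N. dK p N * x ^ N)" for x :: real
  have summ: "summable (\<lambda>N. dK p N * R ^ N)" if R: "0 \<le> R" "R < 1" for R
  proof -
    have "summable (\<lambda>M. R * (cK p (Suc M) * R ^ M))"
      using Suc.IH[OF R] by (intro summable_mult) (simp add: sums_iff)
    then have "summable (\<lambda>M. dK p (Suc M) * R ^ Suc M)"
    proof (rule summable_comparison_test'[where N = 0])
      fix M :: nat
      have "cK p (Suc M) / real (Suc M) \<le> cK p (Suc M) / 1"
        by (intro divide_left_mono) (auto simp: cK_nonneg)
      then have "dK p (Suc M) \<le> cK p (Suc M)" by (simp add: dK_def)
      then show "norm (dK p (Suc M) * R ^ Suc M) \<le> R * (cK p (Suc M) * R ^ M)"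
      proof -
        have "dK p (Suc M) * (R * R ^ M) \<le> cK p (Suc M) * (R * R ^ M)"
          using R \<open>dK p (Suc M) \<le> cK p (Suc M)\<close> by (intro mult_right_mono) auto
        then show ?thesis using R dK_nonneg[of p "Suc M"] by (simp add: mult_ac)
      qed
    qed
    then show ?thesis using summable_Suc_iff[of "\<lambda>N. dK p N * R ^ N"] by simp
  qed
  have dG: "(G has_real_derivative (- ln (1 - x)) ^ p / (fact p * (1 - x))) (at x)" if x: "0 \<le> x" "x < 1" for x
  proof -
    define R where "R = (1 + x) / 2"
    have R: "0 \<le> R" "R < 1" "norm x < norm R" using x by (auto simp: R_def)
    have "(G has_real_derivative (\<Sum>n. diffs (dK p) n * x ^ n)) (at x)"
      unfolding G_def by (rule termdiffs_strong[OF summ[OF R(1,2)] R(3)])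
    moreover have "diffs (dK p) n = cK p (Suc n)" for n
      by (simp add: diffs_def dK_def)
    ultimately show ?thesis using Suc.IH[OF x] by (simp add: sums_iff)
  qed
  have dPhi: "(\<Phi> has_real_derivative (- ln (1 - x)) ^ p / (fact p * (1 - x))) (at x)" if x: "x < 1" for x
  proof -
    have dl: "((\<lambda>x. - ln (1 - x)) has_real_derivative 1 / (1 - x)) (at x)"
      using x by (auto intro!: derivative_eq_intros simp: field_simps)
    have "(\<Phi> has_real_derivative real (Suc p) * (1 / (1 - x) * (- ln (1 - x)) ^ (Suc p - Suc 0)) / fact (Suc p)) (at x)"
      unfolding \<Phi>_def by (intro DERIV_cdivide DERIV_power dl)
    moreover have "real (Suc p) * (1 / (1 - x) * (- ln (1 - x)) ^ (Suc p - Suc 0)) / fact (Suc p) = (- ln (1 - x)) ^ p / (fact p * (1 - x))"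
      by (simp add: fact_Suc del: of_nat_Suc)
    ultimately show ?thesis by (simp only:)
  qed
  have GPhi: "G y = \<Phi> y" if y: "0 \<le> y" "y < 1" for y
  proof -
    have "\<exists>c. \<forall>z\<in>{0..<1}. (\<lambda>z. G z - \<Phi> z) z = c"
    proof (rule has_field_derivative_zero_constant)
      show "convex {0..<1::real}" by (rule convex_real_interval)
      fix z :: real assume "z \<in> {0..<1}"
      then have "((\<lambda>z. G z - \<Phi> z) has_real_derivative 0) (at z)"
        using DERIV_diff[OF dG dPhi, of z] by auto
      then show "((\<lambda>z. G z - \<Phi> z) has_real_derivative 0) (at z within {0..<1})"
        by (rule has_field_derivative_at_within)
    qed
    then obtain c where c: "\<And>z. z \<in> {0..<1} \<Longrightarrow> G z - \<Phi> z = c" by blast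
    have "G 0 = dK p 0" unfolding G_def by (rule powser_zero)
    then have "G 0 = 0" by (simp add: dK_def)
    moreover have "\<Phi> 0 = 0" by (simp add: \<Phi>_def)
    ultimately have "c = 0" using c[of 0] by simp
    then show ?thesis using c[of y] y by simp
  qed
  have "(\<lambda>k. \<Sum>i\<le>k. (dK p i * x ^ i) * x ^ (k - i)) sums ((\<Sum>k. dK p k * x ^ k) * (\<Sum>k. x ^ k))"
  proof (rule Cauchy_product_sums)
    show "summable (\<lambda>k. norm (dK p k * x ^ k))"
      using summ[OF Suc.prems] Suc.prems dK_nonneg by simp
    show "summable (\<lambda>k. norm (x ^ k))"
      using Suc.prems by (simp add: summable_geometric)
  qed
  moreover have "(\<Sum>i\<le>k. (dK p i * x ^ i) * x ^ (k - i)) = cK (Suc p) (Suc k) * x ^ k" for k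
  proof -
    have "(\<Sum>i\<le>k. (dK p i * x ^ i) * x ^ (k - i)) = (\<Sum>i\<le>k. dK p i * x ^ k)"
      by (intro sum.cong refl) (simp add: mult.assoc power_add[symmetric])
    then show ?thesis by (simp add: cK_partial sum_distrib_right)
  qed
  moreover have "(\<Sum>k. dK p k * x ^ k) * (\<Sum>k. x ^ k) = (- ln (1 - x)) ^ Suc p / (fact (Suc p) * (1 - x))"
    using GPhi[OF Suc.prems] suminf_geometric[of x] Suc.prems unfolding G_def \<Phi>_def by simp
  ultimately show ?case by simp
qed

lemma M0: "(\<integral>\<^sup>+ u. ennreal (indicator {0<..<1} u * (u ^ K * (-ln u) ^ n)) \<partial>lborel) = ennreal (fact n / real (Suc K) ^ Suc n)"
proof -
  have int: "integrable lborel (\<lambda>u. indicator {0<..<1::real} u * (u ^ K * (-ln u) ^ n))"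
    using mono_log_integral(1)[of K n] by (simp add: set_integrable_def)
  have nn: "AE u in lborel. 0 \<le> indicator {0<..<1::real} u * (u ^ K * (-ln u) ^ n)"
    by (auto simp: indicator_def ln_less_zero_iff less_imp_le intro!: mult_nonneg_nonneg zero_le_power)
  have "(LBINT u. indicator {0<..<1::real} u * (u ^ K * (-ln u) ^ n)) = fact n / real (Suc K) ^ Suc n"
    using mono_log_integral(2)[of K n] by (simp add: set_lebesgue_integral_def)
  then show ?thesis using nn_integral_eq_integral[OF int nn] by simp
qed

lemma M1:
  assumes y: "y > 0"
  shows "(\<integral>\<^sup>+ x. ennreal (indicator {0<..<y} x * (x ^ K * (ln (y / x)) ^ n)) \<partial>lborel)
       = ennreal (y ^ Suc K * fact n / real (Suc K) ^ Suc n)"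
proof -
  have "(\<integral>\<^sup>+ x. ennreal (indicator {0<..<y} x * (x ^ K * (ln (y / x)) ^ n)) \<partial>lborel)
      = ennreal \<bar>y\<bar> * (\<integral>\<^sup>+ u. ennreal (indicator {0<..<y} (0 + y * u) * ((0 + y * u) ^ K * (ln (y / (0 + y * u))) ^ n)) \<partial>lborel)"
    by (rule nn_integral_real_affine) (use y in auto)
  also have "(\<integral>\<^sup>+ u. ennreal (indicator {0<..<y} (0 + y * u) * ((0 + y * u) ^ K * (ln (y / (0 + y * u))) ^ n)) \<partial>lborel)
      = (\<integral>\<^sup>+ u. ennreal (y ^ K) * ennreal (indicator {0<..<1} u * (u ^ K * (-ln u) ^ n)) \<partial>lborel)"
  proof (rule nn_integral_cong)
    fix u :: real
    show "ennreal (indicator {0<..<y} (0 + y * u) * ((0 + y * u) ^ K * (ln (y / (0 + y * u))) ^ n))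
        = ennreal (y ^ K) * ennreal (indicator {0<..<1} u * (u ^ K * (-ln u) ^ n))"
    proof (cases "0 < u \<and> u < 1")
      case True
      then have "ln (y / (y * u)) = - ln u" using y by (simp add: ln_div)
      moreover have "0 < y * u \<and> y * u < y" using True y by (simp add: mult_less_cancel_left1)
      moreover have "0 \<le> u ^ K * (- ln u) ^ n" using True by (simp add: ln_less_zero_iff less_imp_le)
      ultimately show ?thesis using True y by (simp add: ennreal_mult[symmetric] power_mult_distrib mult_ac)
    next
      case False
      then have "\<not> (0 < y * u \<and> y * u < y)" using y by (auto simp: zero_less_mult_iff mult_less_cancel_left1)
      then have "indicator {0<..<y} (0 + y * u) = (0::real)" "indicator {0<..<1} u = (0::real)"
        using False by (auto simp: indicator_def)
      then show ?thesis by simp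
    qed
  qed
  also have "\<dots> = ennreal (y ^ K) * ennreal (fact n / real (Suc K) ^ Suc n)"
    by (subst nn_integral_cmult) (auto simp: M0)
  finally show ?thesis using y by (simp add: ennreal_mult[symmetric] mult_ac)
qed

lemma SC:
  "(\<integral>\<^sup>+ y. ennreal (indicator {0<..<1} y * (y ^ K * (ln (1 / (1 - y))) ^ q)) \<partial>lborel)
     = ennreal (fact q * bK q (Suc K) / real (Suc K))"
proof -
  have "(\<integral>\<^sup>+ y. ennreal (indicator {0<..<1} y * (y ^ K * (ln (1 / (1 - y))) ^ q)) \<partial>lborel)
      = ennreal \<bar>-1\<bar> * (\<integral>\<^sup>+ s. ennreal (indicator {0<..<1} (1 + (-1) * s) * ((1 + (-1) * s) ^ K * (ln (1 / (1 - (1 + (-1) * s)))) ^ q)) \<partial>lborel)"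
    by (rule nn_integral_real_affine) auto
  also have "\<dots> = (\<integral>\<^sup>+ s. ennreal (indicator {0<..<1} (1 + (-1) * s) * ((1 + (-1) * s) ^ K * (ln (1 / (1 - (1 + (-1) * s)))) ^ q)) \<partial>lborel)"
    by simp
  also have "\<dots> = (\<integral>\<^sup>+ s. ennreal (indicator {0<..<1} s *\<^sub>R ((1 - s) ^ K * (-ln s) ^ q)) \<partial>lborel)"
  proof (intro nn_integral_cong)
    fix s :: real
    show "ennreal (indicator {0<..<1} (1 + (-1) * s) * ((1 + (-1) * s) ^ K * (ln (1 / (1 - (1 + (-1) * s)))) ^ q))
        = ennreal (indicator {0<..<1} s *\<^sub>R ((1 - s) ^ K * (-ln s) ^ q))"
    proof (cases "0 < s \<and> s < 1")
      case True
      then show ?thesis by (simp add: ln_div)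
    next
      case False
      then show ?thesis by (auto simp: indicator_def)
    qed
  qed
  also have "\<dots> = ennreal (LBINT s. indicator {0<..<1} s *\<^sub>R ((1 - s) ^ K * (-ln s) ^ q))"
  proof (rule nn_integral_eq_integral)
    show "integrable lborel (\<lambda>s. indicator {0<..<1::real} s *\<^sub>R ((1 - s) ^ K * (-ln s) ^ q))"
      using stepC_int(1)[of K q] by (simp add: set_integrable_def)
    show "AE s in lborel. 0 \<le> indicator {0<..<1::real} s *\<^sub>R ((1 - s) ^ K * (-ln s) ^ q)"
      by (auto simp: indicator_def ln_less_zero_iff less_imp_le intro!: mult_nonneg_nonneg zero_le_power)
  qed
  also have "(LBINT s. indicator {0<..<1} s *\<^sub>R ((1 - s) ^ K * (-ln s) ^ q)) = fact q * bK q (Suc K) / real (Suc K)"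
    using stepC_int(2)[of K q] by (simp add: set_lebesgue_integral_def)
  finally show ?thesis .
qed

definition fE :: "nat \<Rightarrow> nat \<Rightarrow> nat \<Rightarrow> real \<times> real \<Rightarrow> real" where
  "fE n p q t = (ln (1 / (1 - fst t))) ^ p * (ln (1 / (1 - snd t))) ^ q * (ln (snd t / fst t)) ^ n / ((1 - fst t) * snd t)"

lemma Inner:
  assumes y: "0 < y" "y < 1"
  shows "(\<integral>\<^sup>+ x. ennreal (indicator E2 (x, y) * fE n p q (x, y)) \<partial>lborel)
       = (\<Sum>K. ennreal (fact p * fact n * cK p (Suc K) / real (Suc K) ^ Suc n * (y ^ K * (ln (1 / (1 - y))) ^ q)))"
proof -
  define Ly where "Ly = (ln (1 / (1 - y))) ^ q"
  have Ly: "Ly \<ge> 0" using y by (simp add: Ly_def)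
  define A where "A K = fact p * cK p (Suc K) * Ly / y" for K
  have A: "A K \<ge> 0" for K using Ly y cK_nonneg by (simp add: A_def)
  define g where "g K x = indicator {0<..<y} x * (A K * (x ^ K * (ln (y / x)) ^ n))" for K x
  have g_nn: "g K x \<ge> 0" for K x
  proof (cases "0 < x \<and> x < y")
    case True
    then have "ln (y / x) \<ge> 0" by (simp add: ln_ge_zero_iff)
    then show ?thesis using True A by (simp add: g_def)
  qed (auto simp: g_def)
  have pt: "ennreal (indicator E2 (x, y) * fE n p q (x, y)) = (\<Sum>K. ennreal (g K x))" for x
  proof (cases "0 < x \<and> x < y")
    case True
    have sA: "(\<lambda>K. cK p (Suc K) * x ^ K) sums ((- ln (1 - x)) ^ p / (fact p * (1 - x)))"
      using True y by (intro stepA) auto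
    define c where "c = fact p * (ln (y / x)) ^ n * Ly / y"
    have s1: "(\<lambda>K. c * (cK p (Suc K) * x ^ K)) sums (c * ((- ln (1 - x)) ^ p / (fact p * (1 - x))))"
      by (rule sums_mult[OF sA])
    have s2: "c * (cK p (Suc K) * x ^ K) = g K x" for K
      using True by (simp add: c_def g_def A_def)
    have s3: "c * ((- ln (1 - x)) ^ p / (fact p * (1 - x))) = indicator E2 (x, y) * fE n p q (x, y)"
    proof -
      have "ln (1 / (1 - x)) = - ln (1 - x)" using True y by (simp add: ln_div)
      then show ?thesis using True y by (simp add: c_def E2_def fE_def Ly_def indicator_def mult_ac)
    qed
    have "(\<lambda>K. g K x) sums (indicator E2 (x, y) * fE n p q (x, y))"
      using s1 unfolding s2 s3 .
    then show ?thesis using suminf_ennreal_eq[of "\<lambda>K. g K x", OF g_nn] by simp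
  next
    case False
    then have "indicator E2 (x, y) = (0::real)" "\<And>K. g K x = 0" by (auto simp: E2_def indicator_def g_def)
    then show ?thesis by simp
  qed
  have meas: "(\<lambda>x. ennreal (g K x)) \<in> borel_measurable lborel" for K
    unfolding g_def by measurable
  have "(\<integral>\<^sup>+ x. ennreal (indicator E2 (x, y) * fE n p q (x, y)) \<partial>lborel) = (\<integral>\<^sup>+ x. (\<Sum>K. ennreal (g K x)) \<partial>lborel)"
    by (simp add: pt)
  also have "\<dots> = (\<Sum>K. \<integral>\<^sup>+ x. ennreal (g K x) \<partial>lborel)"
    by (rule nn_integral_suminf[OF meas])
  also have "\<dots> = (\<Sum>K. ennreal (fact p * fact n * cK p (Suc K) / real (Suc K) ^ Suc n * (y ^ K * (ln (1 / (1 - y))) ^ q)))"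
  proof (rule suminf_cong)
    fix K
    have "(\<integral>\<^sup>+ x. ennreal (g K x) \<partial>lborel) = (\<integral>\<^sup>+ x. ennreal (A K) * ennreal (indicator {0<..<y} x * (x ^ K * (ln (y / x)) ^ n)) \<partial>lborel)"
    proof (rule nn_integral_cong)
      fix x :: real
      show "ennreal (g K x) = ennreal (A K) * ennreal (indicator {0<..<y} x * (x ^ K * (ln (y / x)) ^ n))"
      proof (cases "0 < x \<and> x < y")
        case True
        then have "ln (y / x) \<ge> 0" by (simp add: ln_ge_zero_iff)
        then show ?thesis using True A by (simp add: g_def ennreal_mult[symmetric])
      qed (auto simp: g_def)
    qed
    also have "\<dots> = ennreal (A K) * ennreal (y ^ Suc K * fact n / real (Suc K) ^ Suc n)"
      by (subst nn_integral_cmult) (auto simp: M1[OF y(1)])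
    also have "\<dots> = ennreal (fact p * fact n * cK p (Suc K) / real (Suc K) ^ Suc n * (y ^ K * (ln (1 / (1 - y))) ^ q))"
      using A[of K] y by (simp add: ennreal_mult[symmetric] A_def Ly_def field_simps)
    finally show "(\<integral>\<^sup>+ x. ennreal (g K x) \<partial>lborel) = \<dots>" .
  qed
  finally show ?thesis .
qed

lemma Outer:
  "(\<integral>\<^sup>+ t. ennreal (indicator E2 t * fE n p q t) \<partial>lborel) = ennreal (fact p * fact q * fact n * (\<Sum>K. uK n p q K))"
proof -
  define c where "c K = fact p * fact n * cK p (Suc K) / real (Suc K) ^ Suc n" for K
  have c: "c K \<ge> 0" for K using cK_nonneg by (simp add: c_def)
  define h where "h K y = indicator {0<..<1} y * (c K * (y ^ K * (ln (1 / (1 - y))) ^ q))" for K y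
  have h_nn: "h K y \<ge> 0" for K y using c by (auto simp: h_def indicator_def)
  have meas: "(\<lambda>t. ennreal (indicator E2 t * fE n p q t)) \<in> borel_measurable (lborel \<Otimes>\<^sub>M lborel)"
  proof -
    have eq: "E2 = {t. 0 < fst t \<and> fst t < snd t \<and> snd t < 1}" by (auto simp: E2_def)
    show ?thesis unfolding fE_def eq by measurable
  qed
  have "(\<integral>\<^sup>+ t. ennreal (indicator E2 t * fE n p q t) \<partial>lborel) = (\<integral>\<^sup>+ t. ennreal (indicator E2 t * fE n p q t) \<partial>(lborel \<Otimes>\<^sub>M lborel))"
    by (simp only: lborel_prod)
  also have "\<dots> = (\<integral>\<^sup>+ y. (\<integral>\<^sup>+ x. ennreal (indicator E2 (x, y) * fE n p q (x, y)) \<partial>lborel) \<partial>lborel)"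
    by (rule lborel_pair.nn_integral_snd[OF meas, symmetric])
  also have "\<dots> = (\<integral>\<^sup>+ y. (\<Sum>K. ennreal (h K y)) \<partial>lborel)"
  proof (rule nn_integral_cong)
    fix y :: real
    show "(\<integral>\<^sup>+ x. ennreal (indicator E2 (x, y) * fE n p q (x, y)) \<partial>lborel) = (\<Sum>K. ennreal (h K y))"
    proof (cases "0 < y \<and> y < 1")
      case True
      then show ?thesis using Inner[of y n p q] by (simp add: h_def c_def)
    next
      case False
      then have "indicator E2 (x, y) = (0::real)" for x by (auto simp: E2_def indicator_def)
      moreover have "h K y = 0" for K using False by (simp add: h_def)
      ultimately show ?thesis by simp
    qed
  qed
  also have "\<dots> = (\<Sum>K. \<integral>\<^sup>+ y. ennreal (h K y) \<partial>lborel)"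
    by (rule nn_integral_suminf) (simp add: h_def, measurable)
  also have "\<dots> = (\<Sum>K. ennreal (fact p * fact q * fact n * uK n p q (Suc K)))"
  proof (rule suminf_cong)
    fix K
    have "(\<integral>\<^sup>+ y. ennreal (h K y) \<partial>lborel) = (\<integral>\<^sup>+ y. ennreal (c K) * ennreal (indicator {0<..<1} y * (y ^ K * (ln (1 / (1 - y))) ^ q)) \<partial>lborel)"
    proof (rule nn_integral_cong)
      fix y :: real
      show "ennreal (h K y) = ennreal (c K) * ennreal (indicator {0<..<1} y * (y ^ K * (ln (1 / (1 - y))) ^ q))"
      proof (cases "0 < y \<and> y < 1")
        case True
        then show ?thesis using c[of K] by (simp add: h_def ennreal_mult[symmetric])
      qed (auto simp: h_def)
    qed
    also have "\<dots> = ennreal (c K) * ennreal (fact q * bK q (Suc K) / real (Suc K))"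
      by (subst nn_integral_cmult) (auto simp: SC)
    also have "\<dots> = ennreal (fact p * fact q * fact n * uK n p q (Suc K))"
      using c[of K] bK_nonneg[of q "Suc K"]
      by (simp add: ennreal_mult[symmetric] c_def uK_def field_simps del: of_nat_Suc)
    finally show "(\<integral>\<^sup>+ y. ennreal (h K y) \<partial>lborel) = \<dots>" .
  qed
  also have "\<dots> = ennreal (fact p * fact q * fact n * (\<Sum>K. uK n p q K))"
  proof (rule suminf_ennreal_eq)
    show "\<And>K. 0 \<le> fact p * fact q * fact n * uK n p q (Suc K)" using uK_nonneg by simp
    have "(\<lambda>K. uK n p q (Suc K)) sums (\<Sum>K. uK n p q K)"
      using summable_sums[OF uK_summable[of n p q]] by (subst sums_Suc_iff) (simp add: uK_def)
    then show "(\<lambda>K. fact p * fact q * fact n * uK n p q (Suc K)) sums (fact p * fact q * fact n * (\<Sum>K. uK n p q K))"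
      by (rule sums_mult)
  qed
  finally show ?thesis .
qed

lemma LINT_eq:
  "(LINT t : E2 | lborel. fE n p q t) = fact p * fact q * fact n * (\<Sum>K. uK n p q K)"
proof -
  have nn: "0 \<le> indicator E2 t * fE n p q t" for t
  proof (cases "t \<in> E2")
    case True
    then obtain x y where t: "t = (x, y)" "0 < x" "x < y" "y < 1" by (auto simp: E2_def)
    have "ln (1 / (1 - x)) \<ge> 0" "ln (1 / (1 - y)) \<ge> 0" "ln (y / x) \<ge> 0"
      using t by (auto simp: ln_ge_zero_iff)
    then show ?thesis using t True by (simp add: fE_def)
  qed simp
  have meas: "(\<lambda>t. indicator E2 t * fE n p q t) \<in> borel_measurable lborel"
  proof -
    have eq: "E2 = {t. 0 < fst t \<and> fst t < snd t \<and> snd t < 1}" by (auto simp: E2_def)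
    have "(\<lambda>t. indicator E2 t * fE n p q t) \<in> borel_measurable (lborel \<Otimes>\<^sub>M lborel)"
      unfolding fE_def eq by measurable
    then show ?thesis by (simp only: lborel_prod)
  qed
  have "has_bochner_integral lborel (\<lambda>t. indicator E2 t * fE n p q t) (fact p * fact q * fact n * (\<Sum>K. uK n p q K))"
  proof (rule has_bochner_integral_nn_integral[OF meas])
    show "AE x in lborel. 0 \<le> indicator E2 x * fE n p q x" using nn by simp
    show "0 \<le> fact p * fact q * fact n * (\<Sum>K. uK n p q K)"
      using suminf_nonneg[OF uK_summable uK_nonneg] by simp
    show "(\<integral>\<^sup>+ x. ennreal (indicator E2 x * fE n p q x) \<partial>lborel) = ennreal (fact p * fact q * fact n * (\<Sum>K. uK n p q K))"
      by (rule Outer)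
  qed
  then show ?thesis unfolding set_lebesgue_integral_def by (simp add: has_bochner_integral_integral_eq)
qed

theorem theorem2p2:
  fixes n p q :: nat
  shows "Gfun n p q =
           (\<Sum>r = p + 1..p + q + 1. real ((r - 1) choose p) *
              (\<Sum>a \<in> compositions r (p + q + 1). mzv (butlast a @ [last a + n + 1]))) \<and>
         Gfun n p q =
           1 / (fact p * fact q * fact n) *
           (LINT t : E2 | lborel.
              (ln (1 / (1 - fst t))) ^ p * (ln (1 / (1 - snd t))) ^ q * (ln (snd t / fst t)) ^ n
              / ((1 - fst t) * snd t))"
proof
  show "Gfun n p q =
           (\<Sum>r = p + 1..p + q + 1. real ((r - 1) choose p) *
              (\<Sum>a \<in> compositions r (p + q + 1). mzv (butlast a @ [last a + n + 1])))"
    by (simp only: Gfun_eq RHS_eq)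
  have "(LINT t : E2 | lborel.
              (ln (1 / (1 - fst t))) ^ p * (ln (1 / (1 - snd t))) ^ q * (ln (snd t / fst t)) ^ n
              / ((1 - fst t) * snd t)) = fact p * fact q * fact n * (\<Sum>K. uK n p q K)"
    using LINT_eq[of n p q] by (simp add: fE_def)
  then show "Gfun n p q =
           1 / (fact p * fact q * fact n) *
           (LINT t : E2 | lborel.
              (ln (1 / (1 - fst t))) ^ p * (ln (1 / (1 - snd t))) ^ q * (ln (snd t / fst t)) ^ n
              / ((1 - fst t) * snd t))"
    by (simp add: Gfun_eq)
qed

end
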